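(* Let $a\in[-1,1)$ and $\psi_a=\mathds{1}_{[a,1]}$ on $[-1,1]$. Write $P_{\mathcal{A}_+}(\psi_a)=\sum_{n=0}^\infty c_nt^n$ with $c_n\ge0$, and let $S(a)=\{n\in\mathbb{N}:c_n>0\}$. Then $S(a)=\{0,1,2,3\}$ if and only if $\frac1{\sqrt5}<a<\frac{\sqrt{105}-5}{10}$. Moreover, for every such $a$, \[ P_{\mathcal{A}_+}(\psi_a)=\frac18(1-a)(4-5a-5a^2)+\frac{15}{32}(1-a^2)(3-7a^2)t+\frac{15}{8}a(1-a^2)t^2+\frac{35}{32}(1-a^2)(5a^2-1)t^3. \]
   Context: $\mathbb{N}=\{0,1,2,\dots\}$. $\psi_a(t)=0$ for $t\in[-1,a)$ and $\psi_a(t)=1$ for $t\in[a,1]$. $\mathcal{A}_+=\{\sum_{n=0}^\infty a_nt^n : a_n\ge0,\ \text{the series converges in }L^2([-1,1])\}$ (real $L^2$ for Lebesgue measure, convergence of partial sums); it is a closed convex cone, $P_{\mathcal{A}_+}$ denotes the metric projection onto it (the unique nearest point), and every element of $\mathcal{A}_+$ has a unique representation $\sum_n c_nt^n$ with $c_n\ge0$. *)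

theory Defs
  imports "HOL-Analysis.Analysis"
begin

definition psi :: "real \<Rightarrow> real \<Rightarrow> real" where
  "psi a t = (if a \<le> t then 1 else 0)"

definition L2 :: "(real \<Rightarrow> real) \<Rightarrow> bool" where
  "L2 f \<longleftrightarrow> f \<in> borel_measurable lborel \<and>
     set_integrable lborel {-1..1} (\<lambda>t. (f t)\<^sup>2)"

definition L2dist2 :: "(real \<Rightarrow> real) \<Rightarrow> (real \<Rightarrow> real) \<Rightarrow> real" where
  "L2dist2 f g = (LINT t:{-1..1}|lborel. (f t - g t)\<^sup>2)"

definition series_L2 :: "(nat \<Rightarrow> real) \<Rightarrow> (real \<Rightarrow> real) \<Rightarrow> bool" where
  "series_L2 c g \<longleftrightarrow> L2 g \<and>
     (\<lambda>N. L2dist2 g (\<lambda>t. \<Sum>n<N. c n * t ^ n)) \<longlonglongrightarrow> 0"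

definition in_Aplus :: "(nat \<Rightarrow> real) \<Rightarrow> (real \<Rightarrow> real) \<Rightarrow> bool" where
  "in_Aplus c g \<longleftrightarrow> (\<forall>n. 0 \<le> c n) \<and> series_L2 c g"

definition is_proj_Aplus :: "(real \<Rightarrow> real) \<Rightarrow> (nat \<Rightarrow> real) \<Rightarrow> (real \<Rightarrow> real) \<Rightarrow> bool" where
  "is_proj_Aplus f c g \<longleftrightarrow> in_Aplus c g \<and>
     (\<forall>d h. in_Aplus d h \<longrightarrow> L2dist2 f g \<le> L2dist2 f h)"

end

theory Submission
  imports Defs
begin


definition ip :: "(real \<Rightarrow> real) \<Rightarrow> (real \<Rightarrow> real) \<Rightarrow> real" where
  "ip u v = (LINT t:{-1..1}|lborel. u t * v t)"

lemma L2_prod: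
  assumes "L2 u" "L2 v"
  shows "set_integrable lborel {-1..1::real} (\<lambda>t. u t * v t)"
proof (rule set_integrable_bound[where f="\<lambda>t. (u t)\<^sup>2 + (v t)\<^sup>2"])
  show "set_integrable lborel {-1..1::real} (\<lambda>t. (u t)\<^sup>2 + (v t)\<^sup>2)"
    using assms unfolding L2_def by (intro set_integral_add) auto
  have "u \<in> borel_measurable lborel" "v \<in> borel_measurable lborel"
    using assms unfolding L2_def by auto
  then show "set_borel_measurable lborel {-1..1} (\<lambda>t. u t * v t)"
    unfolding set_borel_measurable_def by measurable
  show "AE x in lborel. x \<in> {-1..1} \<longrightarrow> norm (u x * v x) \<le> norm ((u x)\<^sup>2 + (v x)\<^sup>2)"
  proof (intro AE_I2 impI)
    fix x
    have h: "0 \<le> (\<bar>u x\<bar> - \<bar>v x\<bar>)\<^sup>2" by simp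
    have "2*(\<bar>u x\<bar>*\<bar>v x\<bar>) \<le> (u x)\<^sup>2 + (v x)\<^sup>2"
      using h unfolding power2_diff by simp
    moreover have "0 \<le> \<bar>u x\<bar>*\<bar>v x\<bar>" by simp
    ultimately have "\<bar>u x * v x\<bar> \<le> (u x)\<^sup>2 + (v x)\<^sup>2"
      unfolding abs_mult by linarith
    then show "norm (u x * v x) \<le> norm ((u x)\<^sup>2 + (v x)\<^sup>2)" by simp
  qed
qed

lemma L2_meas: "L2 u \<Longrightarrow> u \<in> borel_measurable lborel"
  unfolding L2_def by auto

lemma L2_I:
  assumes "u \<in> borel_measurable lborel" "set_integrable lborel {-1..1::real} (\<lambda>t. u t * u t)"
  shows "L2 u"
  using assms unfolding L2_def by (simp add: power2_eq_square)

lemma L2_add: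
  assumes "L2 u" "L2 v" shows "L2 (\<lambda>t. u t + v t)"
proof (rule L2_I)
  show "(\<lambda>t. u t + v t) \<in> borel_measurable lborel" using assms by (intro borel_measurable_add L2_meas)
  have "set_integrable lborel {-1..1::real} (\<lambda>t. u t * u t + 2 * (u t * v t) + v t * v t)"
    using L2_prod[OF assms(1) assms(1)] L2_prod[OF assms(1) assms(2)] L2_prod[OF assms(2) assms(2)]
    by (intro set_integral_add set_integrable_mult_right) auto
  then show "set_integrable lborel {-1..1::real} (\<lambda>t. (u t + v t) * (u t + v t))"
    by (simp add: algebra_simps)
qed

lemma L2_scale:
  assumes "L2 u" shows "L2 (\<lambda>t. r * u t)"
proof (rule L2_I)
  show "(\<lambda>t. r * u t) \<in> borel_measurable lborel" using assms by (intro borel_measurable_times borel_measurable_const L2_meas)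
  have "set_integrable lborel {-1..1::real} (\<lambda>t. (r*r) * (u t * u t))"
    using L2_prod[OF assms(1) assms(1)] by (intro set_integrable_mult_right) auto
  then show "set_integrable lborel {-1..1::real} (\<lambda>t. (r * u t) * (r * u t))"
    by (simp add: algebra_simps)
qed

lemma L2_diff:
  assumes "L2 u" "L2 v" shows "L2 (\<lambda>t. u t - v t)"
  using L2_add[OF assms(1) L2_scale[OF assms(2), of "-1"]] by simp

lemma L2_cont:
  assumes "continuous_on UNIV u" shows "L2 u"
proof (rule L2_I)
  show "u \<in> borel_measurable lborel" using assms by (simp add: borel_measurable_continuous_onI)
  show "set_integrable lborel {-1..1::real} (\<lambda>t. u t * u t)"
    by (intro borel_integrable_atLeastAtMost' continuous_intros continuous_on_subset[OF assms]) auto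
qed

lemma L2_psum: "L2 (\<lambda>t. \<Sum>n<N. c n * t ^ n)"
  by (intro L2_cont continuous_intros)

lemma L2_mon: "L2 (\<lambda>t. t ^ n)"
  by (intro L2_cont continuous_intros)

lemma L2_psi: "L2 (psi a)"
proof (rule L2_I)
  show "psi a \<in> borel_measurable lborel" unfolding psi_def by measurable
  show "set_integrable lborel {-1..1::real} (\<lambda>t. psi a t * psi a t)"
  proof (rule set_integrable_bound[where f="\<lambda>t. 1::real"])
    show "set_integrable lborel {-1..1::real} (\<lambda>t. 1::real)"
      by (intro borel_integrable_atLeastAtMost' continuous_intros)
    show "set_borel_measurable lborel {-1..1} (\<lambda>t. psi a t * psi a t)"
      unfolding set_borel_measurable_def psi_def by measurable
    show "AE x in lborel. x \<in> {-1..1} \<longrightarrow> norm (psi a x * psi a x) \<le> norm (1::real)"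
      by (auto simp: psi_def)
  qed
qed

lemma ip_sym: "ip u v = ip v u"
  unfolding ip_def by (simp add: mult.commute)

lemma ip_add_right:
  assumes "L2 u" "L2 v" "L2 w"
  shows "ip u (\<lambda>t. v t + w t) = ip u v + ip u w"
proof -
  have "ip u (\<lambda>t. v t + w t) = (LINT t:{-1..1}|lborel. u t * v t + u t * w t)"
    unfolding ip_def by (simp add: algebra_simps)
  also have "\<dots> = ip u v + ip u w"
    unfolding ip_def using L2_prod[OF assms(1,2)] L2_prod[OF assms(1,3)] by (rule set_integral_add)
  finally show ?thesis .
qed

lemma ip_scale_right: "ip u (\<lambda>t. r * v t) = r * ip u v"
proof -
  have "ip u (\<lambda>t. r * v t) = (LINT t:{-1..1}|lborel. r * (u t * v t))"
    unfolding ip_def by (simp add: algebra_simps)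
  then show ?thesis unfolding ip_def by simp
qed

lemma ip_diff_right:
  assumes "L2 u" "L2 v" "L2 w"
  shows "ip u (\<lambda>t. v t - w t) = ip u v - ip u w"
  using ip_add_right[OF assms(1,2) L2_scale[OF assms(3), of "-1"]] ip_scale_right[of u "-1" w]
  by simp

lemma ip_add_left:
  assumes "L2 u" "L2 v" "L2 w"
  shows "ip (\<lambda>t. v t + w t) u = ip v u + ip w u"
  using ip_add_right[OF assms] by (simp add: ip_sym)

lemma ip_diff_left:
  assumes "L2 u" "L2 v" "L2 w"
  shows "ip (\<lambda>t. v t - w t) u = ip v u - ip w u"
  using ip_diff_right[OF assms] by (simp add: ip_sym)

lemma ip_scale_left: "ip (\<lambda>t. r * v t) u = r * ip v u"
  using ip_scale_right[of u r v] by (simp add: ip_sym)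

lemma ip_psum:
  assumes "L2 u"
  shows "ip u (\<lambda>t. \<Sum>n<N. c n * t ^ n) = (\<Sum>n<N. c n * ip u (\<lambda>t. t ^ n))"
proof (induction N)
  case 0
  then show ?case unfolding ip_def by simp
next
  case (Suc N)
  have "ip u (\<lambda>t. \<Sum>n<Suc N. c n * t ^ n) = ip u (\<lambda>t. (\<Sum>n<N. c n * t ^ n) + c N * t ^ N)"
    by simp
  also have "\<dots> = ip u (\<lambda>t. \<Sum>n<N. c n * t ^ n) + ip u (\<lambda>t. c N * t ^ N)"
    by (rule ip_add_right[OF assms L2_psum]) (intro L2_scale L2_mon)
  also have "\<dots> = (\<Sum>n<Suc N. c n * ip u (\<lambda>t. t ^ n))"
    using Suc by (simp add: ip_scale_right)
  finally show ?case .
qed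

lemma ip_nonneg: "0 \<le> ip u u"
  unfolding ip_def set_lebesgue_integral_def
  by (intro Bochner_Integration.integral_nonneg) (simp add: indicator_def)

lemma L2dist2_ip: "L2dist2 f h = ip (\<lambda>t. f t - h t) (\<lambda>t. f t - h t)"
  unfolding L2dist2_def ip_def by (simp add: power2_eq_square)

lemma ip_quad:
  assumes "L2 D" "L2 m"
  shows "ip (\<lambda>t. D t - s * m t) (\<lambda>t. D t - s * m t) = ip D D - 2 * s * ip D m + s\<^sup>2 * ip m m"
proof -
  have Lsm: "L2 (\<lambda>t. s * m t)" by (rule L2_scale[OF assms(2)])
  have L: "L2 (\<lambda>t. D t - s * m t)" by (rule L2_diff[OF assms(1) Lsm])
  have "ip (\<lambda>t. D t - s * m t) (\<lambda>t. D t - s * m t)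
      = ip D (\<lambda>t. D t - s * m t) - ip (\<lambda>t. s * m t) (\<lambda>t. D t - s * m t)"
    by (rule ip_diff_left[OF L assms(1) Lsm])
  also have "\<dots> = (ip D D - ip D (\<lambda>t. s * m t)) - (ip (\<lambda>t. s * m t) D - ip (\<lambda>t. s * m t) (\<lambda>t. s * m t))"
    using ip_diff_right[OF assms(1) assms(1) Lsm] ip_diff_right[OF Lsm assms(1) Lsm] by simp
  also have "\<dots> = ip D D - 2 * s * ip D m + s\<^sup>2 * ip m m"
    by (simp add: ip_scale_left ip_scale_right ip_sym[of m D] power2_eq_square algebra_simps)
  finally show ?thesis .
qed

lemma ip_bound:
  assumes "L2 u" "L2 v" "0 < e"
  shows "\<bar>ip u v\<bar> \<le> (e * ip u u + ip v v / e) / 2"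
proof -
  have I1: "set_integrable lborel {-1..1::real} (\<lambda>t. (e * (u t * u t) + (v t * v t) / e) / 2)"
    using L2_prod[OF assms(1,1)] L2_prod[OF assms(2,2)]
    by (intro set_integrable_divide set_integral_add set_integrable_mult_right) auto
  have R: "(LINT t:{-1..1}|lborel. (e * (u t * u t) + (v t * v t) / e) / 2) = (e * ip u u + ip v v / e) / 2"
    using L2_prod[OF assms(1,1)] L2_prod[OF assms(2,2)] unfolding ip_def
    by (subst set_integral_divide_zero, subst set_integral_add) auto
  have pw: "\<bar>u t * v t\<bar> \<le> (e * (u t * u t) + (v t * v t) / e) / 2" for t
  proof -
    have "0 \<le> (e * \<bar>u t\<bar> - \<bar>v t\<bar>)\<^sup>2 / e" using assms(3) by simp
    also have "(e * \<bar>u t\<bar> - \<bar>v t\<bar>)\<^sup>2 / e = e * (u t * u t) + (v t * v t) / e - 2 * \<bar>u t * v t\<bar>"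
      using assms(3) by (simp add: power2_eq_square field_simps abs_mult)
    finally show ?thesis by simp
  qed
  have "ip u v \<le> (e * ip u u + ip v v / e) / 2"
    unfolding R[symmetric] unfolding ip_def
    by (rule set_integral_mono[OF L2_prod[OF assms(1,2)] I1]) (rule order_trans[OF abs_ge_self pw])
  moreover have "- ip u v \<le> (e * ip u u + ip v v / e) / 2"
  proof -
    have "- ip u v = (LINT t:{-1..1}|lborel. - (u t * v t))"
      unfolding ip_def by (simp add: set_integral_uminus[OF L2_prod[OF assms(1,2)]])
    also have "\<dots> \<le> (LINT t:{-1..1}|lborel. (e * (u t * u t) + (v t * v t) / e) / 2)"
      apply (rule set_integral_mono[OF _ I1])
      using set_integrable_mult_right[OF L2_prod[OF assms(1,2)], of "-1"] apply simp
      by (rule order_trans[OF abs_ge_minus_self pw])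
    finally show ?thesis using R by simp
  qed
  ultimately show ?thesis by linarith
qed

lemma ip_zero:
  assumes "L2 w" "L2 m" "ip w w = 0"
  shows "ip w m = 0"
proof (rule ccontr)
  assume ne: "ip w m \<noteq> 0"
  define x where "x = \<bar>ip w m\<bar>"
  define M where "M = ip m m"
  have x: "0 < x" using ne unfolding x_def by simp
  have M: "0 \<le> M" unfolding M_def by (rule ip_nonneg)
  define e where "e = (M + 1) / x"
  have e: "0 < e" using x M unfolding e_def by simp
  have "x \<le> (e * 0 + M / e) / 2" using ip_bound[OF assms(1,2) e] assms(3) unfolding x_def M_def by simp
  also have "\<dots> = M * x / (2 * (M + 1))" unfolding e_def using x M by (simp add: field_simps)
  also have "\<dots> < x"
  proof -
    have "M * x < 2 * (M + 1) * x" using x M by (simp add: mult_strict_right_mono)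
    then show ?thesis using M by (simp add: field_simps)
  qed
  finally show False by simp
qed

lemma ip_AE:
  assumes "L2 w" "ip w w = 0"
  shows "AE t in lborel. t \<in> {-1..1} \<longrightarrow> w t = 0"
proof -
  have int: "integrable lborel (\<lambda>t. indicator {-1..1::real} t *\<^sub>R (w t * w t))"
    using L2_prod[OF assms(1,1)] unfolding set_integrable_def .
  have "integral\<^sup>L lborel (\<lambda>t. indicator {-1..1::real} t *\<^sub>R (w t * w t)) = 0"
    using assms(2) unfolding ip_def set_lebesgue_integral_def .
  then have "AE t in lborel. indicator {-1..1::real} t *\<^sub>R (w t * w t) = 0"
    by (subst (asm) integral_nonneg_eq_0_iff_AE[OF int]) (auto simp: indicator_def)
  then show ?thesis
    by eventually_elim (auto simp: indicator_def)
qed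

lemma ip_lim:
  assumes u: "L2 u" and h: "L2 h" and s: "\<And>N. L2 (s N)"
    and lim: "(\<lambda>N. L2dist2 h (s N)) \<longlonglongrightarrow> 0"
  shows "(\<lambda>N. ip u (s N)) \<longlonglongrightarrow> ip u h"
proof -
  define A where "A = ip u u"
  have A: "0 \<le> A" unfolding A_def by (rule ip_nonneg)
  have eq: "ip u (s N) - ip u h = - ip u (\<lambda>t. h t - s N t)" for N
    using ip_diff_right[OF u h s] by simp
  have bnd: "\<bar>ip u (s N) - ip u h\<bar> \<le> (e * A + L2dist2 h (s N) / e) / 2" if "0 < e" for e N
    using ip_bound[OF u L2_diff[OF h s] that] unfolding eq L2dist2_ip A_def by simp
  show ?thesis
  proof (rule LIMSEQ_I)
    fix r :: real assume r: "0 < r"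
    define e where "e = r / (A + 1)"
    have e: "0 < e" unfolding e_def using r A by simp
    have "r * e > 0" using r e by simp
    from LIMSEQ_D[OF lim this] obtain no where no: "\<And>n. n \<ge> no \<Longrightarrow> norm (L2dist2 h (s n) - 0) < r * e"
      by blast
    show "\<exists>no. \<forall>n\<ge>no. norm (ip u (s n) - ip u h) < r"
    proof (intro exI allI impI)
      fix n assume "n \<ge> no"
      then have B: "\<bar>L2dist2 h (s n)\<bar> < r * e" using no by simp
      have "L2dist2 h (s n) / e < r" using B e by (simp add: divide_less_eq)
      moreover have "e * A < r"
      proof -
        have "e * A = r * A / (A + 1)" unfolding e_def by simp
        also have "\<dots> < r" using r A by (simp add: divide_less_eq)
        finally show ?thesis .
      qed
      ultimately show "norm (ip u (s n) - ip u h) < r"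
        using bnd[OF e, of n] by simp
    qed
  qed
qed

lemma ip_mon_mon:
  "ip (\<lambda>t. t ^ m) (\<lambda>t. t ^ n) = (1 - (-1) ^ (m + n + 1)) / real (m + n + 1)"
proof -
  have "ip (\<lambda>t. t ^ m) (\<lambda>t. t ^ n) = (\<integral>x. x ^ (m + n) * indicator {-1..1} x \<partial>lborel)"
    unfolding ip_def set_lebesgue_integral_def
    by (intro Bochner_Integration.integral_cong) (auto simp: power_add indicator_def)
  also have "\<dots> = (1 ^ Suc (m + n) - (-1) ^ Suc (m + n)) / Suc (m + n)"
    by (rule integral_power) simp
  finally show ?thesis by simp
qed

lemma ip_psi_mon:
  assumes "-1 \<le> a" "a \<le> 1"
  shows "ip (psi a) (\<lambda>t. t ^ n) = (1 - a ^ (n + 1)) / real (n + 1)"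
proof -
  have "ip (psi a) (\<lambda>t. t ^ n) = (\<integral>x. x ^ n * indicator {a..1} x \<partial>lborel)"
    unfolding ip_def set_lebesgue_integral_def using assms
    by (intro Bochner_Integration.integral_cong) (auto simp: psi_def indicator_def)
  also have "\<dots> = (1 ^ Suc n - a ^ Suc n) / Suc n"
    by (rule integral_power) (use assms in simp)
  finally show ?thesis by simp
qed

lemma real_min:
  fixes X Y :: real
  assumes "\<And>s. 0 < s \<Longrightarrow> s < 1 \<Longrightarrow> 0 \<le> -2 * s * X + s\<^sup>2 * Y" "0 \<le> Y"
  shows "X \<le> 0"
proof (rule ccontr)
  assume "\<not> X \<le> 0"
  then have X: "0 < X" by simp
  define s where "s = min (1/2) (X / (Y + 1))"
  have s0: "0 < s" using X assms(2) unfolding s_def by simp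
  have s1: "s < 1" unfolding s_def by simp
  have "s * Y \<le> X / (Y + 1) * Y" unfolding s_def using assms(2)
    by (intro mult_right_mono) auto
  also have "\<dots> < X" using X assms(2) by (simp add: field_simps)
  finally have "s * Y < X" .
  then have "s * (s * Y) < s * X" using s0 by simp
  then have "-2 * s * X + s\<^sup>2 * Y < 0" using s0 X by (simp add: power2_eq_square algebra_simps)
  with assms(1)[OF s0 s1] show False by simp
qed

lemma in_Aplus_L2: "in_Aplus c g \<Longrightarrow> L2 g"
  unfolding in_Aplus_def series_L2_def by simp

lemma in_Aplus_bump:
  assumes "in_Aplus c g" "0 \<le> s"
  shows "in_Aplus (\<lambda>k. c k + (if k = n then s else 0)) (\<lambda>t. g t + s * t ^ n)"
proof -
  have g: "L2 g" using assms(1) by (rule in_Aplus_L2)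
  have lim: "(\<lambda>N. L2dist2 g (\<lambda>t. \<Sum>k<N. c k * t ^ k)) \<longlonglongrightarrow> 0"
    using assms(1) unfolding in_Aplus_def series_L2_def by simp
  have ev: "eventually (\<lambda>N. L2dist2 g (\<lambda>t. \<Sum>k<N. c k * t ^ k) =
      L2dist2 (\<lambda>t. g t + s * t ^ n) (\<lambda>t. \<Sum>k<N. (c k + (if k = n then s else 0)) * t ^ k)) sequentially"
    unfolding eventually_sequentially
  proof (intro exI allI impI)
    fix N assume "Suc n \<le> N"
    then have nN: "n \<in> {..<N}" by simp
    have pw: "(\<Sum>k<N. (c k + (if k = n then s else 0)) * t ^ k) = (\<Sum>k<N. c k * t ^ k) + s * t ^ n" for t
    proof -
      have "(\<Sum>k<N. (c k + (if k = n then s else 0)) * t ^ k) = (\<Sum>k<N. c k * t ^ k) + (\<Sum>k<N. (if k = n then s * t ^ k else 0))"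
        by (subst sum.distrib[symmetric]) (rule sum.cong, auto simp: distrib_right)
      also have "(\<Sum>k<N. (if k = n then s * t ^ k else 0)) = s * t ^ n"
        using nN by (simp add: sum.delta')
      finally show ?thesis .
    qed
    then show "L2dist2 g (\<lambda>t. \<Sum>k<N. c k * t ^ k) =
      L2dist2 (\<lambda>t. g t + s * t ^ n) (\<lambda>t. \<Sum>k<N. (c k + (if k = n then s else 0)) * t ^ k)"
      unfolding L2dist2_def pw by simp
  qed
  show ?thesis
    unfolding in_Aplus_def series_L2_def
  proof (intro conjI allI)
    show "0 \<le> c k + (if k = n then s else 0)" for k
      using assms unfolding in_Aplus_def by simp
    show "L2 (\<lambda>t. g t + s * t ^ n)" by (intro L2_add g L2_scale L2_mon)
    show "(\<lambda>N. L2dist2 (\<lambda>t. g t + s * t ^ n) (\<lambda>t. \<Sum>k<N. (c k + (if k = n then s else 0)) * t ^ k)) \<longlonglongrightarrow> 0"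
      using tendsto_cong[OF ev] lim by simp
  qed
qed

lemma in_Aplus_scale:
  assumes "in_Aplus c g" "0 \<le> r"
  shows "in_Aplus (\<lambda>k. r * c k) (\<lambda>t. r * g t)"
proof -
  have g: "L2 g" using assms(1) by (rule in_Aplus_L2)
  have lim: "(\<lambda>N. L2dist2 g (\<lambda>t. \<Sum>k<N. c k * t ^ k)) \<longlonglongrightarrow> 0"
    using assms(1) unfolding in_Aplus_def series_L2_def by simp
  have eq: "L2dist2 (\<lambda>t. r * g t) (\<lambda>t. \<Sum>k<N. r * c k * t ^ k) = r\<^sup>2 * L2dist2 g (\<lambda>t. \<Sum>k<N. c k * t ^ k)" for N
  proof -
    have "L2dist2 (\<lambda>t. r * g t) (\<lambda>t. \<Sum>k<N. r * c k * t ^ k)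
        = (LINT t:{-1..1}|lborel. r\<^sup>2 * (g t - (\<Sum>k<N. c k * t ^ k))\<^sup>2)"
      unfolding L2dist2_def
      by (simp add: sum_distrib_left[symmetric] mult.assoc right_diff_distrib[symmetric] power_mult_distrib)
    then show ?thesis unfolding L2dist2_def by simp
  qed
  show ?thesis
    unfolding in_Aplus_def series_L2_def
  proof (intro conjI allI)
    show "0 \<le> r * c k" for k using assms unfolding in_Aplus_def by simp
    show "L2 (\<lambda>t. r * g t)" by (intro L2_scale g)
    show "(\<lambda>N. L2dist2 (\<lambda>t. r * g t) (\<lambda>t. \<Sum>k<N. r * c k * t ^ k)) \<longlonglongrightarrow> 0"
      unfolding eq using tendsto_mult_right_zero[OF lim] by simp
  qed
qed

lemma proj_props:
  assumes P: "is_proj_Aplus f c g" and f: "L2 f"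
  shows "ip (\<lambda>t. f t - g t) (\<lambda>t. t ^ n) \<le> 0"
    and "c n * ip (\<lambda>t. f t - g t) (\<lambda>t. t ^ n) = 0"
proof -
  have cg: "in_Aplus c g" and mn: "\<And>d h. in_Aplus d h \<Longrightarrow> L2dist2 f g \<le> L2dist2 f h"
    using P unfolding is_proj_Aplus_def by auto
  have g: "L2 g" using cg by (rule in_Aplus_L2)
  have c0: "\<And>k. 0 \<le> c k" using cg unfolding in_Aplus_def by simp
  have lim: "(\<lambda>N. L2dist2 g (\<lambda>t. \<Sum>k<N. c k * t ^ k)) \<longlonglongrightarrow> 0"
    using cg unfolding in_Aplus_def series_L2_def by simp
  define D where "D = (\<lambda>t. f t - g t)"
  have D: "L2 D" unfolding D_def by (rule L2_diff[OF f g])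
  have DD: "L2dist2 f g = ip D D" unfolding D_def by (rule L2dist2_ip)
  have neg: "ip D (\<lambda>t. t ^ k) \<le> 0" for k
  proof (rule real_min[OF _ ip_nonneg])
    fix s :: real assume s: "0 < s" "s < 1"
    have "L2dist2 f g \<le> L2dist2 f (\<lambda>t. g t + s * t ^ k)"
      by (rule mn[OF in_Aplus_bump[OF cg]]) (use s in simp)
    also have "L2dist2 f (\<lambda>t. g t + s * t ^ k) = ip (\<lambda>t. D t - s * t ^ k) (\<lambda>t. D t - s * t ^ k)"
      unfolding L2dist2_ip D_def by (simp add: algebra_simps)
    also have "\<dots> = ip D D - 2 * s * ip D (\<lambda>t. t ^ k) + s\<^sup>2 * ip (\<lambda>t. t ^ k) (\<lambda>t. t ^ k)"
      by (rule ip_quad[OF D L2_mon])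
    finally show "0 \<le> - 2 * s * ip D (\<lambda>t. t ^ k) + s\<^sup>2 * ip (\<lambda>t. t ^ k) (\<lambda>t. t ^ k)"
      unfolding DD by simp
  qed
  have Dg: "ip D g = 0"
  proof -
    have "ip D g \<le> 0"
    proof (rule real_min[OF _ ip_nonneg])
      fix s :: real assume s: "0 < s" "s < 1"
      have "L2dist2 f g \<le> L2dist2 f (\<lambda>t. (1 + s) * g t)"
        by (rule mn[OF in_Aplus_scale[OF cg]]) (use s in simp)
      also have "L2dist2 f (\<lambda>t. (1 + s) * g t) = ip (\<lambda>t. D t - s * g t) (\<lambda>t. D t - s * g t)"
        unfolding L2dist2_ip D_def by (simp add: algebra_simps)
      also have "\<dots> = ip D D - 2 * s * ip D g + s\<^sup>2 * ip g g"
        by (rule ip_quad[OF D g])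
      finally show "0 \<le> - 2 * s * ip D g + s\<^sup>2 * ip g g"
        unfolding DD by simp
    qed
    moreover have "- ip D g \<le> 0"
    proof (rule real_min[OF _ ip_nonneg])
      fix s :: real assume s: "0 < s" "s < 1"
      have "L2dist2 f g \<le> L2dist2 f (\<lambda>t. (1 - s) * g t)"
        by (rule mn[OF in_Aplus_scale[OF cg]]) (use s in simp)
      also have "L2dist2 f (\<lambda>t. (1 - s) * g t) = ip (\<lambda>t. D t - (-s) * g t) (\<lambda>t. D t - (-s) * g t)"
        unfolding L2dist2_ip D_def by (simp add: algebra_simps)
      also have "\<dots> = ip D D - 2 * (-s) * ip D g + (-s)\<^sup>2 * ip g g"
        by (rule ip_quad[OF D g])
      finally show "0 \<le> - 2 * s * (- ip D g) + s\<^sup>2 * ip g g"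
        unfolding DD by simp
    qed
    ultimately show ?thesis by simp
  qed
  have L: "(\<lambda>N. \<Sum>k<N. c k * ip D (\<lambda>t. t ^ k)) \<longlonglongrightarrow> 0"
    using ip_lim[OF D g L2_psum lim] unfolding Dg ip_psum[OF D] .
  have term0: "c n * ip D (\<lambda>t. t ^ n) = 0"
  proof (rule ccontr)
    assume ne: "c n * ip D (\<lambda>t. t ^ n) \<noteq> 0"
    have tn: "c k * ip D (\<lambda>t. t ^ k) \<le> 0" for k using c0[of k] neg[of k] by (simp add: mult_nonneg_nonpos)
    then have lt: "c n * ip D (\<lambda>t. t ^ n) < 0" using ne by (simp add: order_less_le)
    have "\<forall>N\<ge>Suc n. (\<Sum>k<N. c k * ip D (\<lambda>t. t ^ k)) \<le> c n * ip D (\<lambda>t. t ^ n)"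
    proof (intro allI impI)
      fix N assume "Suc n \<le> N"
      then have nN: "n \<in> {..<N}" by simp
      have "(\<Sum>k<N. c k * ip D (\<lambda>t. t ^ k)) = c n * ip D (\<lambda>t. t ^ n) + (\<Sum>k\<in>{..<N} - {n}. c k * ip D (\<lambda>t. t ^ k))"
        using nN by (simp add: sum.remove)
      also have "\<dots> \<le> c n * ip D (\<lambda>t. t ^ n)"
        using tn by (simp add: sum_nonpos)
      finally show "(\<Sum>k<N. c k * ip D (\<lambda>t. t ^ k)) \<le> c n * ip D (\<lambda>t. t ^ n)" .
    qed
    then have "0 \<le> c n * ip D (\<lambda>t. t ^ n) \<longrightarrow> False \<or> True" by simp
    have "0 \<le> c n * ip D (\<lambda>t. t ^ n)"
      by (rule LIMSEQ_le_const2[OF L]) (use \<open>\<forall>N\<ge>Suc n. _\<close> in blast)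
    with lt show False by simp
  qed
  show "ip (\<lambda>t. f t - g t) (\<lambda>t. t ^ n) \<le> 0" using neg[of n] unfolding D_def .
  show "c n * ip (\<lambda>t. f t - g t) (\<lambda>t. t ^ n) = 0" using term0 unfolding D_def .
qed

lemma cand_opt:
  assumes f: "L2 f" and p: "L2 p"
    and neg: "\<And>n. ip (\<lambda>t. f t - p t) (\<lambda>t. t ^ n) \<le> 0"
    and orth: "ip (\<lambda>t. f t - p t) p = 0"
    and dh: "in_Aplus d h"
  shows "L2dist2 f p + L2dist2 p h \<le> L2dist2 f h"
proof -
  define D where "D = (\<lambda>t. f t - p t)"
  have D: "L2 D" unfolding D_def by (rule L2_diff[OF f p])
  have h: "L2 h" using dh by (rule in_Aplus_L2)
  have d0: "\<And>k. 0 \<le> d k" using dh unfolding in_Aplus_def by simp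
  have lim: "(\<lambda>N. L2dist2 h (\<lambda>t. \<Sum>k<N. d k * t ^ k)) \<longlonglongrightarrow> 0"
    using dh unfolding in_Aplus_def series_L2_def by simp
  have L: "(\<lambda>N. \<Sum>k<N. d k * ip D (\<lambda>t. t ^ k)) \<longlonglongrightarrow> ip D h"
    using ip_lim[OF D h L2_psum lim] unfolding ip_psum[OF D] .
  have Dh: "ip D h \<le> 0"
  proof (rule LIMSEQ_le_const2[OF L], intro exI allI impI)
    fix N :: nat
    show "(\<Sum>k<N. d k * ip D (\<lambda>t. t ^ k)) \<le> 0"
      using d0 neg unfolding D_def by (intro sum_nonpos mult_nonneg_nonpos) auto
  qed
  have E: "L2 (\<lambda>t. h t - p t)" by (rule L2_diff[OF h p])
  have "L2dist2 f h = ip (\<lambda>t. D t - 1 * (h t - p t)) (\<lambda>t. D t - 1 * (h t - p t))"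
    unfolding L2dist2_ip D_def by simp
  also have "\<dots> = ip D D - 2 * 1 * ip D (\<lambda>t. h t - p t) + 1\<^sup>2 * ip (\<lambda>t. h t - p t) (\<lambda>t. h t - p t)"
    by (rule ip_quad[OF D E])
  also have "ip D (\<lambda>t. h t - p t) = ip D h"
    using ip_diff_right[OF D h p] orth unfolding D_def by simp
  also have "ip (\<lambda>t. h t - p t) (\<lambda>t. h t - p t) = L2dist2 p h"
    unfolding L2dist2_def ip_def by (simp add: power2_eq_square algebra_simps)
  also have "ip D D = L2dist2 f p" unfolding D_def L2dist2_ip ..
  finally show ?thesis using Dh by simp
qed

definition cs :: "real \<Rightarrow> nat \<Rightarrow> real" where
  "cs a n = (if n = 0 then (1/8) * (1 - a) * (4 - 5*a - 5*a\<^sup>2)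
     else if n = 1 then (15/32) * (1 - a\<^sup>2) * (3 - 7*a\<^sup>2)
     else if n = 2 then (15/8) * a * (1 - a\<^sup>2)
     else if n = 3 then (35/32) * (1 - a\<^sup>2) * (5*a\<^sup>2 - 1) else 0)"

lemma Ip_formula:
  assumes "-1 \<le> a" "a \<le> 1"
  shows "ip (\<lambda>t. psi a t - (\<Sum>k<4. x k * t ^ k)) (\<lambda>t. t ^ n)
     = (1 - a ^ (n + 1)) / real (n + 1) - (\<Sum>k<4. x k * ((1 - (-1) ^ k * (-1) ^ (n + 1)) / real (k + n + 1)))"
proof -
  have "ip (\<lambda>t. psi a t - (\<Sum>k<4. x k * t ^ k)) (\<lambda>t. t ^ n)
      = ip (psi a) (\<lambda>t. t ^ n) - ip (\<lambda>t. \<Sum>k<4. x k * t ^ k) (\<lambda>t. t ^ n)"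
    by (rule ip_diff_left[OF L2_mon L2_psi L2_psum])
  also have "ip (\<lambda>t. \<Sum>k<4. x k * t ^ k) (\<lambda>t. t ^ n) = (\<Sum>k<4. x k * ip (\<lambda>t. t ^ n) (\<lambda>t. t ^ k))"
    by (subst ip_sym) (rule ip_psum[OF L2_mon])
  also have "\<dots> = (\<Sum>k<4. x k * ((1 - (-1) ^ k * (-1) ^ (n + 1)) / real (k + n + 1)))"
    by (intro sum.cong refl) (simp add: ip_mon_mon power_add add.commute add.left_commute)
  finally show ?thesis using ip_psi_mon[OF assms] by simp
qed

lemma sum4: "(\<Sum>k<(4::nat). f k) = f 0 + f 1 + f 2 + (f 3 :: real)"
  by (simp add: eval_nat_numeral)

lemma cs_exp:
  "cs a 0 = 1/2 - 9/8*a + 5/8*a^3"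
  "cs a 1 = 45/32 - 75/16*a^2 + 105/32*a^4"
  "cs a 2 = 15/8*a - 15/8*a^3"
  "cs a 3 = -35/32 + 105/16*a^2 - 175/32*a^4"
  "n \<ge> 4 \<Longrightarrow> cs a n = 0"
  by (simp_all add: cs_def power2_eq_square power3_eq_cube field_simps eval_nat_numeral)

lemma Iform_expand:
  fixes x :: "nat \<Rightarrow> real"
  shows "(1 - a ^ (0 + 1)) / real (0 + 1) - (\<Sum>k<4. x k * ((1 - (-1) ^ k * (-1) ^ (0 + 1)) / real (k + 0 + 1)))
          = (1 - a) - (2 * x 0 + 2/3 * x 2)"
    "(1 - a ^ (1 + 1)) / real (1 + 1) - (\<Sum>k<4. x k * ((1 - (-1) ^ k * (-1) ^ (1 + 1)) / real (k + 1 + 1)))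
          = (1 - a^2)/2 - (2/3 * x 1 + 2/5 * x 3)"
    "(1 - a ^ (2 + 1)) / real (2 + 1) - (\<Sum>k<4. x k * ((1 - (-1) ^ k * (-1) ^ (2 + 1)) / real (k + 2 + 1)))
          = (1 - a^3)/3 - (2/3 * x 0 + 2/5 * x 2)"
    "(1 - a ^ (3 + 1)) / real (3 + 1) - (\<Sum>k<4. x k * ((1 - (-1) ^ k * (-1) ^ (3 + 1)) / real (k + 3 + 1)))
          = (1 - a^4)/4 - (2/5 * x 1 + 2/7 * x 3)"
  by (simp_all add: sum4 eval_nat_numeral)

lemma lin_sys:
  fixes x :: "nat \<Rightarrow> real"
  assumes "2 * x 0 + 2/3 * x 2 = 1 - a" "2/3 * x 0 + 2/5 * x 2 = (1 - a^3)/3"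
    "2/3 * x 1 + 2/5 * x 3 = (1 - a^2)/2" "2/5 * x 1 + 2/7 * x 3 = (1 - a^4)/4"
  shows "x 0 = cs a 0" "x 1 = cs a 1" "x 2 = cs a 2" "x 3 = cs a 3"
proof -
  show "x 0 = cs a 0" using assms unfolding cs_exp by (simp add: field_simps)
  show "x 1 = cs a 1" using assms unfolding cs_exp by (simp add: field_simps)
  show "x 2 = cs a 2" using assms unfolding cs_exp by (simp add: field_simps)
  show "x 3 = cs a 3" using assms unfolding cs_exp by (simp add: field_simps)
qed

lemma frac2: "(u::real) \<noteq> 0 \<Longrightarrow> v \<noteq> 0 \<Longrightarrow> 2 * A / u + 2 * B / v - 1 / u = ((2 * A - 1) * v + 2 * B * u) / (u * v)"
  by (simp add: field_simps)

lemma frac3: "(u::real) \<noteq> 0 \<Longrightarrow> v \<noteq> 0 \<Longrightarrow> w \<noteq> 0 \<Longrightarrow>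
   2 * A / v + 2 * B / w - 1 / u = (2 * A * w * u + 2 * B * v * u - v * w) / (u * v * w)"
  by (simp add: field_simps)

lemma Ip_high:
  assumes a0: "0 < a" and a1: "1 < 5*a^2" and a2: "5*a^2 + 5*a < 4" and n4: "4 \<le> n"
  shows "(1 - a ^ (n + 1)) / real (n + 1) - (\<Sum>k<4. cs a k * ((1 - (-1) ^ k * (-1) ^ (n + 1)) / real (k + n + 1))) < 0"
proof -
  define b where "b = a^2"
  have b1: "1/5 < b" using a1 unfolding b_def by simp
  have b2: "b < 7/25"
  proof (rule ccontr)
    assume "\<not> b < 7/25"
    then have h: "7/25 \<le> a^2" unfolding b_def by simp
    have "13/25 < a"
    proof (rule ccontr)
      assume "\<not> 13/25 < a"
      then have "a \<le> 13/25" by simp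
      then have "a^2 \<le> (13/25)^2" using a0 by (intro power_mono) auto
      with h show False by (simp add: power2_eq_square)
    qed
    with h a2 show False by simp
  qed
  define x where "x = real n"
  have x4: "4 \<le> x" using n4 unfolding x_def by simp
  have apos: "0 < a ^ (n + 1)" using a0 by simp
  have rx: "real (n + 1) = x + 1" unfolding x_def by simp
  have lhs: "(1 - a ^ (n + 1)) / real (n + 1) < 1 / (x + 1)"
    unfolding rx by (rule divide_strict_right_mono) (use apos x4 in auto)
  show ?thesis
  proof (cases "even n")
    case True
    then have m1: "(-1::real) ^ (n + 1) = -1" by simp
    have S: "(\<Sum>k<4. cs a k * ((1 - (-1) ^ k * (-1) ^ (n + 1)) / real (k + n + 1)))
        = 2 * cs a 0 / (x + 1) + 2 * cs a 2 / (x + 3)"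
      unfolding sum4 m1 x_def by (simp add: add.commute mult.commute)
    define e1 where "e1 = a * (3 - 5 * b) / 2"
    define e0 where "e0 = a * (3 - 10 * b)"
    have e1p: "0 < e1" unfolding e1_def using a0 b2 by simp
    have e0p: "0 < e0" unfolding e0_def using a0 b2 by simp
    have num: "(2 * cs a 0 - 1) * (x + 3) + 2 * cs a 2 * (x + 1) = e1 * (x - 4) + e0"
      unfolding cs_exp e1_def e0_def b_def by (simp add: field_simps power2_eq_square power3_eq_cube)
    have numpos: "0 < e1 * (x - 4) + e0" using e1p e0p x4 by (simp add: add_nonneg_pos)
    have "2 * cs a 0 / (x + 1) + 2 * cs a 2 / (x + 3) - 1 / (x + 1)
        = ((2 * cs a 0 - 1) * (x + 3) + 2 * cs a 2 * (x + 1)) / ((x + 1) * (x + 3))"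
      by (rule frac2) (use x4 in auto)
    also have "\<dots> > 0" unfolding num using numpos x4 by simp
    finally show ?thesis unfolding S using lhs by simp
  next
    case False
    then have m1: "(-1::real) ^ (n + 1) = 1" by simp
    have "n \<noteq> 4" using False by auto
    then have "5 \<le> n" using n4 by simp
    then have x5: "5 \<le> x" unfolding x_def by simp
    have S: "(\<Sum>k<4. cs a k * ((1 - (-1) ^ k * (-1) ^ (n + 1)) / real (k + n + 1)))
        = 2 * cs a 1 / (x + 2) + 2 * cs a 3 / (x + 4)"
      unfolding sum4 m1 x_def by (simp add: add.commute mult.commute)
    define q2 where "q2 = -3/8 + 15/4 * b - 35/8 * b^2"
    define q1 where "q1 = -9/4 + 30 * b - 175/4 * b^2"
    define q0 where "q0 = -3 + 45 * b - 105 * b^2"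
    have bb: "b^2 \<le> 12/25 * b - 7/125"
    proof -
      have "0 \<le> (b - 1/5) * (7/25 - b)" using b1 b2 by simp
      moreover have "(b - 1/5) * (7/25 - b) = 12/25 * b - 7/125 - b^2" by algebra
      ultimately show ?thesis by linarith
    qed
    have q2p: "0 \<le> q2" unfolding q2_def using bb b1 by linarith
    have q1p: "0 \<le> q1" unfolding q1_def using bb b1 by linarith
    have q0p: "0 < q0" unfolding q0_def using bb b1 b2 by linarith
    have num: "2 * cs a 1 * (x + 4) * (x + 1) + 2 * cs a 3 * (x + 2) * (x + 1) - (x + 2) * (x + 4)
        = q2 * (x - 5)^2 + q1 * (x - 5) + q0"
      unfolding cs_exp q2_def q1_def q0_def b_def by (simp add: field_simps power2_eq_square power4_eq_xxxx)
    have numpos: "0 < q2 * (x - 5)^2 + q1 * (x - 5) + q0"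
      using q2p q1p q0p x5 by (simp add: add_nonneg_pos)
    have "2 * cs a 1 / (x + 2) + 2 * cs a 3 / (x + 4) - 1 / (x + 1)
        = (2 * cs a 1 * (x + 4) * (x + 1) + 2 * cs a 3 * (x + 2) * (x + 1) - (x + 2) * (x + 4)) / ((x + 1) * (x + 2) * (x + 4))"
      by (rule frac3) (use x4 in auto)
    also have "\<dots> > 0" unfolding num using numpos x4 by simp
    finally show ?thesis unfolding S using lhs by simp
  qed
qed



lemma psum_trunc:
  assumes "\<forall>n\<ge>4. c n = 0" "4 \<le> N"
  shows "(\<lambda>t. \<Sum>k<N. c k * t ^ k) = (\<lambda>t. \<Sum>k<4. c k * (t::real) ^ k)"
proof
  fix t :: real
  show "(\<Sum>k<N. c k * t ^ k) = (\<Sum>k<4. c k * t ^ k)"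
    by (rule sum.mono_neutral_right) (use assms in auto)
qed

lemma coeff_det:
  assumes a: "-1 \<le> a" "a \<le> 1" and cg: "in_Aplus c g" and z: "\<forall>n\<ge>4. c n = 0"
    and I0: "\<And>k. k < 4 \<Longrightarrow> ip (\<lambda>t. psi a t - g t) (\<lambda>t. t ^ k) = 0"
  shows "\<And>k. k < 4 \<Longrightarrow> c k = cs a k"
proof -
  define q where "q = (\<lambda>t. \<Sum>k<4. c k * (t::real) ^ k)"
  have g: "L2 g" using cg by (rule in_Aplus_L2)
  have q: "L2 q" unfolding q_def by (rule L2_psum)
  have lim: "(\<lambda>N. L2dist2 g (\<lambda>t. \<Sum>k<N. c k * t ^ k)) \<longlonglongrightarrow> 0"
    using cg unfolding in_Aplus_def series_L2_def by simp
  have ev: "eventually (\<lambda>N. L2dist2 g (\<lambda>t. \<Sum>k<N. c k * t ^ k) = L2dist2 g q) sequentially"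
    unfolding eventually_sequentially q_def
  proof (intro exI allI impI)
    fix N :: nat assume "4 \<le> N"
    show "L2dist2 g (\<lambda>t. \<Sum>k<N. c k * t ^ k) = L2dist2 g (\<lambda>t. \<Sum>k<4. c k * t ^ k)"
      unfolding psum_trunc[OF z \<open>4 \<le> N\<close>] ..
  qed
  have "(\<lambda>N. L2dist2 g q) \<longlonglongrightarrow> 0" using tendsto_cong[OF ev] lim by simp
  then have d0: "L2dist2 g q = 0" by (rule LIMSEQ_const_iff[THEN iffD1])
  have gq: "ip (\<lambda>t. g t - q t) (\<lambda>t. g t - q t) = 0" using d0 unfolding L2dist2_ip .
  have eqs: "(1 - a ^ (k + 1)) / real (k + 1) - (\<Sum>m<4. c m * ((1 - (-1) ^ m * (-1) ^ (k + 1)) / real (m + k + 1))) = 0"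
    if k: "k < 4" for k
  proof -
    have "ip (\<lambda>t. psi a t - q t) (\<lambda>t. t ^ k) = ip (\<lambda>t. (psi a t - g t) + (g t - q t)) (\<lambda>t. t ^ k)"
      by simp
    also have "\<dots> = ip (\<lambda>t. psi a t - g t) (\<lambda>t. t ^ k) + ip (\<lambda>t. g t - q t) (\<lambda>t. t ^ k)"
      by (rule ip_add_left[OF L2_mon L2_diff[OF L2_psi g] L2_diff[OF g q]])
    also have "\<dots> = 0" using I0[OF k] ip_zero[OF L2_diff[OF g q] L2_mon gq] by simp
    finally have "ip (\<lambda>t. psi a t - q t) (\<lambda>t. t ^ k) = 0" .
    then show ?thesis unfolding q_def Ip_formula[OF a] .
  qed
  have e0: "2 * c 0 + 2/3 * c 2 = 1 - a" using eqs[of 0] unfolding Iform_expand by simp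
  have e1: "2/3 * c 1 + 2/5 * c 3 = (1 - a^2)/2" using eqs[of 1] unfolding Iform_expand by simp
  have e2: "2/3 * c 0 + 2/5 * c 2 = (1 - a^3)/3" using eqs[of 2] unfolding Iform_expand by simp
  have e3: "2/5 * c 1 + 2/7 * c 3 = (1 - a^4)/4" using eqs[of 3] unfolding Iform_expand by simp
  note L = lin_sys[OF e0 e2 e1 e3]
  fix k :: nat assume "k < 4"
  then have "k = 0 \<or> k = 1 \<or> k = 2 \<or> k = 3" by auto
  then show "c k = cs a k" using L by auto
qed

lemma Ip_low:
  assumes "n < 4"
  shows "(1 - a ^ (n + 1)) / real (n + 1) - (\<Sum>k<4. cs a k * ((1 - (-1) ^ k * (-1) ^ (n + 1)) / real (k + n + 1))) = 0"
proof -
  have "n = 0 \<or> n = 1 \<or> n = 2 \<or> n = 3" using assms by auto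
  then show ?thesis
  proof (elim disjE)
    assume nv: "n = 0" show ?thesis unfolding nv Iform_expand cs_exp by (simp add: field_simps power2_eq_square power3_eq_cube power4_eq_xxxx)
  next
    assume nv: "n = 1" show ?thesis unfolding nv Iform_expand cs_exp by (simp add: field_simps power2_eq_square power3_eq_cube power4_eq_xxxx)
  next
    assume nv: "n = 2" show ?thesis unfolding nv Iform_expand cs_exp by (simp add: field_simps power2_eq_square power3_eq_cube power4_eq_xxxx)
  next
    assume nv: "n = 3" show ?thesis unfolding nv Iform_expand cs_exp by (simp add: field_simps power2_eq_square power3_eq_cube power4_eq_xxxx)
  qed
qed

lemma cs_pos:
  assumes a0: "0 < a" and a1: "1 < 5*a^2" and a2: "5*a^2 + 5*a < 4" and k: "k < 4"
  shows "0 < cs a k"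
proof -
  have aa: "a < 1"
  proof (rule ccontr)
    assume "\<not> a < 1" then have "1 \<le> a" by simp
    then have "1 \<le> a^2" by (simp add: one_le_power)
    with \<open>1 \<le> a\<close> a2 show False by simp
  qed
  have b2: "a^2 < 7/25"
  proof (rule ccontr)
    assume "\<not> a^2 < 7/25"
    then have h: "7/25 \<le> a^2" by simp
    have "13/25 < a"
    proof (rule ccontr)
      assume "\<not> 13/25 < a"
      then have "a \<le> 13/25" by simp
      then have "a^2 \<le> (13/25)^2" using a0 by (intro power_mono) auto
      with h show False by (simp add: power2_eq_square)
    qed
    with h a2 show False by simp
  qed
  have p1: "0 < 1 - a^2" using b2 by simp
  have "k = 0 \<or> k = 1 \<or> k = 2 \<or> k = 3" using k by auto
  then show ?thesis
  proof (elim disjE)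
    assume "k = 0"
    moreover have "0 < 4 - 5*a - 5*a^2" using a2 by simp
    ultimately show ?thesis unfolding cs_def using aa by simp
  next
    assume "k = 1"
    moreover have "0 < 3 - 7*a^2" using b2 by simp
    ultimately show ?thesis unfolding cs_def using p1 by simp
  next
    assume "k = 2"
    then show ?thesis unfolding cs_def using p1 a0 by simp
  next
    assume "k = 3"
    moreover have "0 < 5*a^2 - 1" using a1 by simp
    ultimately show ?thesis unfolding cs_def using p1 by simp
  qed
qed

lemma interval_iff:
  assumes "0 < a"
  shows "(1 / sqrt 5 < a \<and> a < (sqrt 105 - 5) / 10) \<longleftrightarrow> (1 < 5*a^2 \<and> 5*a^2 + 5*a < 4)"
proof -
  have i1: "1 / sqrt 5 < a \<longleftrightarrow> 1 < 5*a^2"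
  proof -
    have "1 / sqrt 5 < a \<longleftrightarrow> 1 < a * sqrt 5" by (simp add: divide_less_eq mult.commute)
    also have "\<dots> \<longleftrightarrow> 1 < (a * sqrt 5)^2"
      using assms by (smt (verit) one_less_power power_le_one real_sqrt_ge_zero zero_le_mult_iff zero_less_numeral)
    also have "(a * sqrt 5)^2 = 5 * a^2" by (simp add: power_mult_distrib)
    finally show ?thesis .
  qed
  have i2: "a < (sqrt 105 - 5) / 10 \<longleftrightarrow> 5*a^2 + 5*a < 4"
  proof -
    have "a < (sqrt 105 - 5) / 10 \<longleftrightarrow> 10 * a + 5 < sqrt 105" by (simp add: field_simps)
    also have "\<dots> \<longleftrightarrow> (10 * a + 5)^2 < 105"
    proof -
      have "0 \<le> 10 * a + 5" using assms by simp
      then show ?thesis using real_less_rsqrt real_sqrt_less_mono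
        by (metis abs_of_nonneg real_sqrt_abs real_sqrt_less_iff)
    qed
    also have "(10 * a + 5)^2 = 100 * a^2 + 100 * a + 25" by (simp add: power2_eq_square algebra_simps)
    finally show ?thesis by linarith
  qed
  show ?thesis using i1 i2 by simp
qed

theorem proposition1p11:
  fixes a :: real and c :: "nat \<Rightarrow> real" and g :: "real \<Rightarrow> real"
  assumes "-1 \<le> a" and "a < 1"
    and "is_proj_Aplus (psi a) c g"
  shows "({n. c n > 0} = {0, 1, 2, 3} \<longleftrightarrow> 1 / sqrt 5 < a \<and> a < (sqrt 105 - 5) / 10)
    \<and> (1 / sqrt 5 < a \<and> a < (sqrt 105 - 5) / 10 \<longrightarrow>
        (AE t in lborel. t \<in> {-1..1} \<longrightarrow>
           g t = (1/8) * (1 - a) * (4 - 5*a - 5*a\<^sup>2)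
               + (15/32) * (1 - a\<^sup>2) * (3 - 7*a\<^sup>2) * t
               + (15/8) * a * (1 - a\<^sup>2) * t\<^sup>2
               + (35/32) * (1 - a\<^sup>2) * (5*a\<^sup>2 - 1) * t ^ 3))"
proof -
  have am: "-1 \<le> a" "a \<le> 1" using assms(1,2) by auto
  have P: "is_proj_Aplus (psi a) c g" by (rule assms(3))
  have cg: "in_Aplus c g" and mn: "\<And>d h. in_Aplus d h \<Longrightarrow> L2dist2 (psi a) g \<le> L2dist2 (psi a) h"
    using P unfolding is_proj_Aplus_def by auto
  have g: "L2 g" using cg by (rule in_Aplus_L2)
  have c0: "\<And>k. 0 \<le> c k" using cg unfolding in_Aplus_def by simp
  note negg = proj_props(1)[OF P L2_psi]
  note compl = proj_props(2)[OF P L2_psi]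
  define p where "p = (\<lambda>t. \<Sum>k<4. cs a k * (t::real) ^ k)"
  have p: "L2 p" unfolding p_def by (rule L2_psum)
  have dir1: "1 < 5*a^2 \<and> 5*a^2 + 5*a < 4 \<and> 0 < a" if S: "{n. c n > 0} = {0, 1, 2, 3}"
  proof -
    have z: "\<forall>n\<ge>4. c n = 0"
    proof (intro allI impI)
      fix n :: nat assume "4 \<le> n"
      then have "n \<notin> {n. c n > 0}" unfolding S by auto
      then show "c n = 0" using c0[of n] by simp
    qed
    have pos: "0 < c k" if "k < 4" for k
    proof -
      have "k \<in> {0, 1, 2, 3}" using that by auto
      then show ?thesis unfolding S[symmetric] by simp
    qed
    have I0: "ip (\<lambda>t. psi a t - g t) (\<lambda>t. t ^ k) = 0" if "k < 4" for k
      using compl[of k] pos[OF that] by simp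
    have ck: "c k = cs a k" if "k < 4" for k by (rule coeff_det[OF am cg z I0 that])
    have q0: "0 < cs a 0" and q2: "0 < cs a 2" and q3: "0 < cs a 3"
      using pos[of 0] pos[of 2] pos[of 3] ck[of 0] ck[of 2] ck[of 3] by auto
    have sq: "0 \<le> 1 - a^2"
    proof -
      have "0 \<le> (1 - a) * (1 + a)" using am by simp
      then show ?thesis by (simp add: power2_eq_square algebra_simps)
    qed
    have "cs a 2 = (15/8) * (a * (1 - a^2))" by (simp add: cs_def)
    then have "0 < (15/8) * (a * (1 - a^2))" using q2 by linarith
    then have h2: "0 < a * (1 - a^2)" by (rule zero_less_mult_pos) simp
    then have a0: "0 < a" and s1: "0 < 1 - a^2" using sq by (auto simp: zero_less_mult_iff)
    have "cs a 3 = (35/32) * ((1 - a^2) * (5*a^2 - 1))" by (simp add: cs_def)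
    then have "0 < (35/32) * ((1 - a^2) * (5*a^2 - 1))" using q3 by linarith
    then have "0 < (1 - a^2) * (5*a^2 - 1)" by (rule zero_less_mult_pos) simp
    then have h3: "1 < 5*a^2" using s1 by (simp add: zero_less_mult_iff)
    have "cs a 0 = (1/8) * ((1 - a) * (4 - 5*a - 5*a^2))" by (simp add: cs_def)
    then have "0 < (1/8) * ((1 - a) * (4 - 5*a - 5*a^2))" using q0 by linarith
    then have "0 < (1 - a) * (4 - 5*a - 5*a^2)" by (rule zero_less_mult_pos) simp
    then have "0 < 4 - 5*a - 5*a^2" using assms(2) by (simp add: zero_less_mult_iff)
    then show ?thesis using h3 a0 by simp
  qed
  have dir2: "{n. c n > 0} = {0, 1, 2, 3} \<and> (AE t in lborel. t \<in> {-1..1} \<longrightarrow> g t = p t)"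
    if a0: "0 < a" and a1: "1 < 5*a^2" and a2: "5*a^2 + 5*a < 4"
  proof -
    have Ip: "ip (\<lambda>t. psi a t - p t) (\<lambda>t. t ^ n)
        = (1 - a ^ (n + 1)) / real (n + 1) - (\<Sum>k<4. cs a k * ((1 - (-1) ^ k * (-1) ^ (n + 1)) / real (k + n + 1)))" for n
      unfolding p_def by (rule Ip_formula[OF am])
    have Ipneg: "ip (\<lambda>t. psi a t - p t) (\<lambda>t. t ^ n) \<le> 0" for n
    proof (cases "n < 4")
      case True then show ?thesis unfolding Ip using Ip_low[OF True] by simp
    next
      case False then show ?thesis unfolding Ip using Ip_high[OF a0 a1 a2, of n] by simp
    qed
    have Ipz: "ip (\<lambda>t. psi a t - p t) (\<lambda>t. t ^ n) = 0" if "n < 4" for n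
      unfolding Ip using Ip_low[OF that] by simp
    have Iplt: "ip (\<lambda>t. psi a t - p t) (\<lambda>t. t ^ n) < 0" if "4 \<le> n" for n
      unfolding Ip using Ip_high[OF a0 a1 a2 that] by simp
    have orth: "ip (\<lambda>t. psi a t - p t) p = 0"
    proof -
      have "ip (\<lambda>t. psi a t - p t) p = (\<Sum>k<4. cs a k * ip (\<lambda>t. psi a t - p t) (\<lambda>t. t ^ k))"
        unfolding p_def by (rule ip_psum[OF L2_diff[OF L2_psi L2_psum]])
      also have "\<dots> = 0" using Ipz by simp
      finally show ?thesis .
    qed
    have csz: "\<forall>n\<ge>4. cs a n = 0" using cs_exp(5) by simp
    have pA: "in_Aplus (cs a) p"
      unfolding in_Aplus_def series_L2_def
    proof (intro conjI allI)
      show "0 \<le> cs a n" for n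
        using cs_pos[OF a0 a1 a2, of n] cs_exp(5)[of n a] by (cases "n < 4") auto
      show "L2 p" by (rule p)
      have ev: "eventually (\<lambda>N. 0 = L2dist2 p (\<lambda>t. \<Sum>n<N. cs a n * t ^ n)) sequentially"
        unfolding eventually_sequentially
      proof (intro exI allI impI)
        fix N :: nat assume "4 \<le> N"
        show "0 = L2dist2 p (\<lambda>t. \<Sum>n<N. cs a n * t ^ n)"
          unfolding psum_trunc[OF csz \<open>4 \<le> N\<close>] p_def L2dist2_def by simp
      qed
      show "(\<lambda>N. L2dist2 p (\<lambda>t. \<Sum>n<N. cs a n * t ^ n)) \<longlonglongrightarrow> 0"
        using tendsto_cong[OF ev, of 0] tendsto_const[of 0 sequentially] by blast
    qed
    have le1: "L2dist2 (psi a) p + L2dist2 p g \<le> L2dist2 (psi a) g"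
      by (rule cand_opt[OF L2_psi p Ipneg orth cg])
    have le2: "L2dist2 (psi a) g \<le> L2dist2 (psi a) p" by (rule mn[OF pA])
    have nn: "0 \<le> L2dist2 p g" unfolding L2dist2_ip by (rule ip_nonneg)
    have pg0: "ip (\<lambda>t. p t - g t) (\<lambda>t. p t - g t) = 0"
      using le1 le2 nn unfolding L2dist2_ip[of p g] by linarith
    have Ieq: "ip (\<lambda>t. psi a t - g t) (\<lambda>t. t ^ n) = ip (\<lambda>t. psi a t - p t) (\<lambda>t. t ^ n)" for n
    proof -
      have "ip (\<lambda>t. psi a t - g t) (\<lambda>t. t ^ n) = ip (\<lambda>t. (psi a t - p t) + (p t - g t)) (\<lambda>t. t ^ n)"
        by simp
      also have "\<dots> = ip (\<lambda>t. psi a t - p t) (\<lambda>t. t ^ n) + ip (\<lambda>t. p t - g t) (\<lambda>t. t ^ n)"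
        by (rule ip_add_left[OF L2_mon L2_diff[OF L2_psi p] L2_diff[OF p g]])
      also have "ip (\<lambda>t. p t - g t) (\<lambda>t. t ^ n) = 0"
        by (rule ip_zero[OF L2_diff[OF p g] L2_mon pg0])
      finally show ?thesis by simp
    qed
    have z: "\<forall>n\<ge>4. c n = 0"
    proof (intro allI impI)
      fix n :: nat assume n: "4 \<le> n"
      have "c n * ip (\<lambda>t. psi a t - g t) (\<lambda>t. t ^ n) = 0" by (rule compl)
      moreover have "ip (\<lambda>t. psi a t - g t) (\<lambda>t. t ^ n) \<noteq> 0" using Iplt[OF n] Ieq[of n] by simp
      ultimately show "c n = 0" by simp
    qed
    have I0: "ip (\<lambda>t. psi a t - g t) (\<lambda>t. t ^ k) = 0" if "k < 4" for k
      using Ieq[of k] Ipz[OF that] by simp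
    have ck: "c k = cs a k" if "k < 4" for k by (rule coeff_det[OF am cg z I0 that])
    have S: "{n. c n > 0} = {0, 1, 2, 3}"
    proof (intro set_eqI iffI)
      fix n assume "n \<in> {n. c n > 0}"
      then have "c n > 0" by simp
      then have "\<not> 4 \<le> n" using z by auto
      then show "n \<in> {0, 1, 2, 3}" by auto
    next
      fix n :: nat assume "n \<in> {0, 1, 2, 3}"
      then have "n < 4" by auto
      then show "n \<in> {n. c n > 0}" using ck cs_pos[OF a0 a1 a2] by simp
    qed
    have AE: "AE t in lborel. t \<in> {-1..1} \<longrightarrow> p t - g t = 0"
      by (rule ip_AE[OF L2_diff[OF p g] pg0])
    then have "AE t in lborel. t \<in> {-1..1} \<longrightarrow> g t = p t"
      by eventually_elim simp
    with S show ?thesis by simp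
  qed
  have pform: "p t = (1/8) * (1 - a) * (4 - 5*a - 5*a\<^sup>2)
               + (15/32) * (1 - a\<^sup>2) * (3 - 7*a\<^sup>2) * t
               + (15/8) * a * (1 - a\<^sup>2) * t\<^sup>2
               + (35/32) * (1 - a\<^sup>2) * (5*a\<^sup>2 - 1) * t ^ 3" for t
    unfolding p_def sum4 by (simp add: cs_def)
  have Icond: "(1 / sqrt 5 < a \<and> a < (sqrt 105 - 5) / 10) \<longleftrightarrow> (0 < a \<and> 1 < 5*a^2 \<and> 5*a^2 + 5*a < 4)"
  proof
    assume I: "1 / sqrt 5 < a \<and> a < (sqrt 105 - 5) / 10"
    have "0 < 1 / sqrt 5" by simp
    then have a0: "0 < a" using I by linarith
    show "0 < a \<and> 1 < 5*a^2 \<and> 5*a^2 + 5*a < 4" using interval_iff[OF a0] I a0 by simp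
  next
    assume I: "0 < a \<and> 1 < 5*a^2 \<and> 5*a^2 + 5*a < 4"
    then show "1 / sqrt 5 < a \<and> a < (sqrt 105 - 5) / 10" using interval_iff[of a] by simp
  qed
  show ?thesis
  proof (intro conjI impI)
    show "({n. c n > 0} = {0, 1, 2, 3} \<longleftrightarrow> 1 / sqrt 5 < a \<and> a < (sqrt 105 - 5) / 10)"
    proof
      assume S: "{n. c n > 0} = {0, 1, 2, 3}"
      show "1 / sqrt 5 < a \<and> a < (sqrt 105 - 5) / 10"
        unfolding Icond using dir1[OF S] by simp
    next
      assume I: "1 / sqrt 5 < a \<and> a < (sqrt 105 - 5) / 10"
      then have "0 < a" "1 < 5*a^2" "5*a^2 + 5*a < 4" unfolding Icond by auto
      from dir2[OF this] show "{n. c n > 0} = {0, 1, 2, 3}" by (rule conjunct1)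
    qed
  next
    assume I: "1 / sqrt 5 < a \<and> a < (sqrt 105 - 5) / 10"
    then have "0 < a" "1 < 5*a^2" "5*a^2 + 5*a < 4" unfolding Icond by auto
    from dir2[OF this] have "AE t in lborel. t \<in> {-1..1} \<longrightarrow> g t = p t" by (rule conjunct2)
    then show "AE t in lborel. t \<in> {-1..1} \<longrightarrow>
           g t = (1/8) * (1 - a) * (4 - 5*a - 5*a\<^sup>2)
               + (15/32) * (1 - a\<^sup>2) * (3 - 7*a\<^sup>2) * t
               + (15/8) * a * (1 - a\<^sup>2) * t\<^sup>2
               + (35/32) * (1 - a\<^sup>2) * (5*a\<^sup>2 - 1) * t ^ 3"
      unfolding pform .
  qed
qed

end
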